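(* There is a universal constant $c>0$ such that the following holds. Fix $0<\epsilon<1/8$. There exist a measurable space $\mathcal X$, a probability measure $\nu$ on $\mathcal X$ and a family $\mathcal U$ of probability measures on $\mathcal X$ such that for all $\mu\in\mathcal U$, $\nu\ll\mu$ and $\left\|\frac{d\nu}{d\mu}\right\|_\infty\le 4$, and such that the following holds. Any estimator $\widehat Z$ that, for every $\mu\in\mathcal U$ and every $Z>0$, given i.i.d. $X_1,\dots,X_n\sim\mu$ and the values $\lambda(X_i)$ of $\lambda=Z\cdot\frac{d\nu}{d\mu}$, satisfies $(1-\epsilon)Z\le\widehat Z\le(1+\epsilon)Z$ with probability at least $2/3$, must use $n\ge c/\epsilon^2$ samples.
   Context: An estimator is a measurable function of $(X_1,\dots,X_n,\lambda(X_1),\dots,\lambda(X_n))$ with no other access to $\mu$, $\lambda$ or $Z$. *)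

theory Defs
  imports "HOL-Probability.Probability"
begin

end

theory Submission
  imports Defs
begin

lemma PiM_density_eq:
  fixes M :: "'a measure" and g :: "'a \<Rightarrow> ennreal"
  assumes fin: "finite I" and g[measurable]: "g \<in> borel_measurable M"
    and sfM: "sigma_finite_measure M" and sfN: "sigma_finite_measure (density M g)"
  shows "PiM I (\<lambda>_. density M g) = density (PiM I (\<lambda>_. M)) (\<lambda>x. \<Prod>i\<in>I. g (x i))"
proof -
  interpret N: product_sigma_finite "\<lambda>_. density M g" by (simp add: product_sigma_finite_def sfN)
  interpret MM: product_sigma_finite "\<lambda>_. M" by (simp add: product_sigma_finite_def sfM)
  have meas: "(\<lambda>x. \<Prod>i\<in>I. g (x i)) \<in> borel_measurable (PiM I (\<lambda>_. M))"
    by measurable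
  show ?thesis
  proof (rule N.PiM_eqI[symmetric])
    show "finite I" by fact
    show "sets (density (PiM I (\<lambda>_. M)) (\<lambda>x. \<Prod>i\<in>I. g (x i))) = sets (PiM I (\<lambda>_. density M g))"
      by (simp, intro sets_PiM_cong) auto
    fix A assume A: "\<And>i. i \<in> I \<Longrightarrow> A i \<in> sets (density M g)"
    hence A': "\<And>i. i \<in> I \<Longrightarrow> A i \<in> sets M" by simp
    have "emeasure (density (PiM I (\<lambda>_. M)) (\<lambda>x. \<Prod>i\<in>I. g (x i))) (PiE I A)
       = (\<integral>\<^sup>+x. (\<Prod>i\<in>I. g (x i)) * indicator (PiE I A) x \<partial>PiM I (\<lambda>_. M))"
      by (rule emeasure_density[OF meas]) (rule sets_PiM_I_finite[OF fin A'])
    also have "\<dots> = (\<integral>\<^sup>+x. (\<Prod>i\<in>I. g (x i) * indicator (A i) (x i)) \<partial>PiM I (\<lambda>_. M))"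
    proof (rule nn_integral_cong)
      fix x assume "x \<in> space (PiM I (\<lambda>_. M))"
      hence ext: "x \<in> extensional I" by (simp add: space_PiM PiE_def)
      have "indicator (PiE I A) x = (\<Prod>i\<in>I. indicator (A i) (x i) :: ennreal)"
        using ext fin by (auto simp: indicator_def PiE_def Pi_def)
      thus "(\<Prod>i\<in>I. g (x i)) * indicator (PiE I A) x = (\<Prod>i\<in>I. g (x i) * indicator (A i) (x i))"
        by (simp add: prod.distrib)
    qed
    also have "\<dots> = (\<Prod>i\<in>I. \<integral>\<^sup>+y. g y * indicator (A i) y \<partial>M)"
      by (rule MM.product_nn_integral_prod[OF fin]) (use A' in measurable)
    also have "\<dots> = (\<Prod>i\<in>I. emeasure (density M g) (A i))"
      by (rule prod.cong) (auto simp: emeasure_density A')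
    finally show "emeasure (density (PiM I (\<lambda>_. M)) (\<lambda>x. \<Prod>i\<in>I. g (x i))) (PiE I A) = (\<Prod>i\<in>I. emeasure (density M g) (A i))" .
  qed
qed

lemma sqrt_amgm1: "(0::real) \<le> L \<Longrightarrow> sqrt L \<le> 1/3 + 3/4 * L"
proof -
  assume "0 \<le> L"
  have "0 \<le> (sqrt L - 2/3)^2" by simp
  also have "(sqrt L - 2/3)^2 = L - 4/3 * sqrt L + 4/9" using \<open>0 \<le> L\<close>
    by (simp add: power2_eq_square algebra_simps)
  finally show ?thesis by linarith
qed

lemma sqrt_amgm2: "(0::real) \<le> L \<Longrightarrow> sqrt L \<le> 3/4 + 1/3 * L"
proof -
  assume "0 \<le> L"
  have "0 \<le> (sqrt L - 3/2)^2" by simp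
  also have "(sqrt L - 3/2)^2 = L - 3 * sqrt L + 9/4" using \<open>0 \<le> L\<close>
    by (simp add: power2_eq_square algebra_simps)
  finally show ?thesis by linarith
qed

lemma BC_bound:
  fixes P :: "'a measure" and L :: "'a \<Rightarrow> real"
  assumes P: "prob_space P" and Q: "prob_space (density P (\<lambda>x. ennreal (L x)))"
    and L[measurable]: "L \<in> borel_measurable P" and Lnn: "\<And>x. 0 \<le> L x"
    and S[measurable]: "S \<in> sets P" and T[measurable]: "T \<in> sets P" and ST: "S \<inter> T = {}"
    and PS: "measure P S \<ge> 2/3" and QT: "measure (density P (\<lambda>x. ennreal (L x))) T \<ge> 2/3"
  shows "(\<integral>\<^sup>+x. ennreal (sqrt (L x)) \<partial>P) \<le> ennreal (17/18)"
proof -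
  define Q' where "Q' = density P (\<lambda>x. ennreal (L x))"
  interpret P: prob_space P by fact
  interpret Q: prob_space Q' unfolding Q'_def by fact
  define Sc where "Sc = space P - S"
  have Sc[measurable]: "Sc \<in> sets P" unfolding Sc_def by auto
  have sQ: "sets Q' = sets P" unfolding Q'_def by simp
  have "(\<integral>\<^sup>+x. ennreal (sqrt (L x)) \<partial>P) \<le> (\<integral>\<^sup>+x.
       (ennreal (1/3) * indicator S x + ennreal (3/4) * indicator Sc x) +
       (ennreal (3/4) * (ennreal (L x) * indicator S x) + ennreal (1/3) * (ennreal (L x) * indicator Sc x)) \<partial>P)"
  proof (rule nn_integral_mono)
    fix x assume x: "x \<in> space P"
    show "ennreal (sqrt (L x)) \<le> (ennreal (1/3) * indicator S x + ennreal (3/4) * indicator Sc x) +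
       (ennreal (3/4) * (ennreal (L x) * indicator S x) + ennreal (1/3) * (ennreal (L x) * indicator Sc x))"
    proof (cases "x \<in> S")
      case True
      hence "x \<notin> Sc" by (simp add: Sc_def)
      have "ennreal (sqrt (L x)) \<le> ennreal (1/3 + 3/4 * L x)"
        using sqrt_amgm1[OF Lnn[of x]] by (rule ennreal_leI)
      also have "\<dots> = ennreal (1/3) + ennreal (3/4 * L x)"
        using Lnn[of x] by (intro ennreal_plus) auto
      also have "ennreal (3/4 * L x) = ennreal (3/4) * ennreal (L x)"
        using Lnn[of x] by (intro ennreal_mult) auto
      finally show ?thesis using True \<open>x \<notin> Sc\<close> by simp
    next
      case False
      hence "x \<in> Sc" using x by (simp add: Sc_def)
      have "ennreal (sqrt (L x)) \<le> ennreal (3/4 + 1/3 * L x)"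
        using sqrt_amgm2[OF Lnn[of x]] by (rule ennreal_leI)
      also have "\<dots> = ennreal (3/4) + ennreal (1/3 * L x)"
        using Lnn[of x] by (intro ennreal_plus) auto
      also have "ennreal (1/3 * L x) = ennreal (1/3) * ennreal (L x)"
        using Lnn[of x] by (intro ennreal_mult) auto
      finally show ?thesis using False \<open>x \<in> Sc\<close> by simp
    qed
  qed
  also have "\<dots> = (ennreal (1/3) * emeasure P S + ennreal (3/4) * emeasure P Sc) +
       (ennreal (3/4) * emeasure Q' S + ennreal (1/3) * emeasure Q' Sc)"
    by (simp add: nn_integral_add nn_integral_cmult Q'_def emeasure_density)
  also have "\<dots> = ennreal (1/3 * measure P S + 3/4 * measure P Sc + 3/4 * measure Q' S + 1/3 * measure Q' Sc)"
  proof -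
    have e: "\<And>c y. 0 \<le> c \<Longrightarrow> 0 \<le> y \<Longrightarrow> ennreal c * ennreal y = ennreal (c*y)"
      by (simp add: ennreal_mult)
    show ?thesis using sQ by (simp add: P.emeasure_eq_measure Q.emeasure_eq_measure e ac_simps)
  qed
  also have "\<dots> \<le> ennreal (17/18)"
  proof (rule ennreal_leI)
    have "measure P Sc = 1 - measure P S" unfolding Sc_def by (simp add: P.prob_compl)
    moreover have "measure Q' Sc = 1 - measure Q' S"
    proof -
      have "space Q' = space P" by (simp add: Q'_def)
      thus ?thesis unfolding Sc_def using sQ by (metis Q.prob_compl S)
    qed
    moreover have "measure Q' S + measure Q' T \<le> 1"
    proof -
      have "measure Q' (S \<union> T) = measure Q' S + measure Q' T"
        using ST sQ by (intro Q.finite_measure_Union) auto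
      moreover have "measure Q' (S \<union> T) \<le> 1" by simp
      ultimately show ?thesis by simp
    qed
    ultimately show "1/3 * measure P S + 3/4 * measure P Sc + 3/4 * measure Q' S + 1/3 * measure Q' Sc \<le> 17/18"
      using PS QT unfolding Q'_def[symmetric] by linarith
  qed
  finally show ?thesis .
qed

definition C :: "real measure" where "C = count_space {0,1}"
definition wt :: "real \<Rightarrow> real \<Rightarrow> ennreal" where "wt p x = ennreal (if x = 1 then p else 1 - p)"
definition mu :: "real \<Rightarrow> real measure" where "mu p = density C (wt p)"
definition nu0 :: "real measure" where "nu0 = density C (\<lambda>x. ennreal (if x = 1 then 1 else 0))"
definition fR :: "real \<Rightarrow> real \<Rightarrow> ennreal" where "fR p x = ennreal (if x = 1 then 1/p else 0)"

lemma space_C[simp]: "space C = {0,1}" and sets_C[simp]: "sets C = Pow {0,1}"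
  by (simp_all add: C_def)

lemma meas_C[measurable]: "f \<in> borel_measurable C"
  by (simp add: C_def)

lemma sets_mu[simp]: "sets (mu p) = Pow {0,1}" and space_mu[simp]: "space (mu p) = {0,1}"
  by (simp_all add: mu_def)

lemma meas_mu[measurable]: "f \<in> borel_measurable (mu p)"
  by (simp add: mu_def C_def)

lemma sets_nu0[simp]: "sets nu0 = Pow {0,1}"
  by (simp add: nu0_def)

lemma mu_prob: "0 \<le> p \<Longrightarrow> p \<le> 1 \<Longrightarrow> prob_space (mu p)"
proof (rule prob_spaceI)
  assume p: "0 \<le> p" "p \<le> 1"
  have "emeasure (mu p) (space (mu p)) = (\<integral>\<^sup>+x. wt p x * indicator {0,1} x \<partial>C)"
    unfolding mu_def by (subst emeasure_density) auto
  also have "\<dots> = (\<Sum>x\<in>{0::real,1}. wt p x * indicator {0,1} x)"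
    unfolding C_def by (rule nn_integral_count_space_finite) simp
  also have "\<dots> = ennreal (1 - p) + ennreal p" by (simp add: wt_def)
  also have "\<dots> = 1" using p by (subst ennreal_plus[symmetric]) auto
  finally show "emeasure (mu p) (space (mu p)) = 1" .
qed

lemma nu0_prob: "prob_space nu0"
proof (rule prob_spaceI)
  have "emeasure nu0 (space nu0) = (\<integral>\<^sup>+x. ennreal (if x = 1 then 1 else 0) * indicator {0,1} x \<partial>C)"
    unfolding nu0_def by (subst emeasure_density) auto
  also have "\<dots> = (\<Sum>x\<in>{0::real,1}. ennreal (if x = 1 then 1 else 0) * indicator {0,1} x)"
    unfolding C_def by (rule nn_integral_count_space_finite) simp
  also have "\<dots> = 1" by simp
  finally show "emeasure nu0 (space nu0) = 1" .
qed

lemma nu_eq: "0 < p \<Longrightarrow> p < 1 \<Longrightarrow> density (mu p) (fR p) = nu0"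
  unfolding mu_def nu0_def
  apply (subst density_density_eq)
    apply (simp_all)
  apply (rule density_cong)
    apply (simp_all add: AE_count_space C_def)
  apply (auto simp: wt_def fR_def ennreal_mult[symmetric])
  done

lemma AE_mu: "0 < p \<Longrightarrow> p < 1 \<Longrightarrow> (AE x in mu p. P x) \<longleftrightarrow> (\<forall>x\<in>{0,1}. P x)"
  unfolding mu_def C_def by (subst AE_density) (auto simp: AE_count_space wt_def)

lemma RN_mu: assumes "0 < p" "p < 1" "x \<in> {0,1}" shows "RN_deriv (mu p) nu0 x = fR p x"
proof -
  interpret prob_space "mu p" using assms by (intro mu_prob) auto
  have "AE x in mu p. fR p x = RN_deriv (mu p) nu0 x"
    by (rule RN_deriv_unique) (auto simp: nu_eq assms)
  thus ?thesis using assms AE_mu by auto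
qed

lemma ac_mu: "0 < p \<Longrightarrow> p < 1 \<Longrightarrow> absolutely_continuous (mu p) nu0"
  using absolutely_continuousI_density[of "fR p" "mu p"] by (simp add: nu_eq)

definition ell :: "real \<Rightarrow> real \<Rightarrow> real" where "ell e x = (if x = 1 then 1 + 4*e else 1 - 4*e)"

lemma mu_b: "0 \<le> e \<Longrightarrow> e < 1/4 \<Longrightarrow> mu ((1 + 4*e)/2) = density (mu (1/2)) (\<lambda>x. ennreal (ell e x))"
  unfolding mu_def
  apply (subst density_density_eq)
    apply (simp_all)
  apply (rule density_cong)
    apply (simp_all add: AE_count_space C_def)
  apply (auto simp: wt_def ell_def ennreal_mult[symmetric] field_simps)
  done

lemma sqrt_prod: "sqrt (prod f A) = (\<Prod>i\<in>A. sqrt (f i))"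
  by (induction A rule: infinite_finite_induct) (auto simp: real_sqrt_mult)

lemma ell_nn: "0 \<le> e \<Longrightarrow> e < 1/4 \<Longrightarrow> 0 \<le> ell e x"
  by (simp add: ell_def)

lemma BC_one: assumes "0 \<le> e" "e < 1/4"
  shows "(\<integral>\<^sup>+x. ennreal (sqrt (ell e x)) \<partial>mu (1/2)) = ennreal (1/2 * sqrt (1 + 4*e) + 1/2 * sqrt (1 - 4*e))"
proof -
  have "(\<integral>\<^sup>+x. ennreal (sqrt (ell e x)) \<partial>mu (1/2)) = (\<integral>\<^sup>+x. wt (1/2) x * ennreal (sqrt (ell e x)) \<partial>C)"
    unfolding mu_def by (rule nn_integral_density) simp_all
  also have "\<dots> = (\<Sum>x\<in>{0::real,1}. wt (1/2) x * ennreal (sqrt (ell e x)))"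
    unfolding C_def by (rule nn_integral_count_space_finite) simp
  also have "\<dots> = ennreal (1/2) * ennreal (sqrt (1 - 4*e)) + ennreal (1/2) * ennreal (sqrt (1 + 4*e))"
    by (simp add: wt_def ell_def)
  also have "\<dots> = ennreal (1/2 * sqrt (1 + 4*e) + 1/2 * sqrt (1 - 4*e))"
  proof -
    have a: "ennreal (1/2) * ennreal (sqrt (1 - 4*e)) = ennreal (1/2 * sqrt (1 - 4*e))"
      using assms by (intro ennreal_mult[symmetric]) auto
    have b: "ennreal (1/2) * ennreal (sqrt (1 + 4*e)) = ennreal (1/2 * sqrt (1 + 4*e))"
      using assms by (intro ennreal_mult[symmetric]) auto
    have c: "ennreal (1/2 * sqrt (1 + 4*e) + 1/2 * sqrt (1 - 4*e)) = ennreal (1/2 * sqrt (1 + 4*e)) + ennreal (1/2 * sqrt (1 - 4*e))"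
      using assms by (intro ennreal_plus) auto
    show ?thesis unfolding a b c by (rule add.commute)
  qed
  finally show ?thesis .
qed

lemma BC_prod: assumes "0 \<le> e" "e < 1/4"
  shows "(\<integral>\<^sup>+x. ennreal (sqrt (\<Prod>i<n. ell e (x i))) \<partial>PiM {..<n} (\<lambda>_. mu (1/2)))
     = ennreal ((1/2 * sqrt (1 + 4*e) + 1/2 * sqrt (1 - 4*e)) ^ n)"
proof -
  interpret product_sigma_finite "\<lambda>_. mu (1/2)"
    by (auto simp: product_sigma_finite_def intro!: prob_space_imp_sigma_finite mu_prob)
  have "(\<integral>\<^sup>+x. ennreal (sqrt (\<Prod>i<n. ell e (x i))) \<partial>PiM {..<n} (\<lambda>_. mu (1/2)))
      = (\<integral>\<^sup>+x. (\<Prod>i<n. ennreal (sqrt (ell e (x i)))) \<partial>PiM {..<n} (\<lambda>_. mu (1/2)))"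
  proof (intro nn_integral_cong)
    fix x
    have "ennreal (\<Prod>i<n. sqrt (ell e (x i))) = (\<Prod>i<n. ennreal (sqrt (ell e (x i))))"
      by (rule prod_ennreal[symmetric]) (use assms in \<open>simp add: ell_nn\<close>)
    thus "ennreal (sqrt (\<Prod>i<n. ell e (x i))) = (\<Prod>i<n. ennreal (sqrt (ell e (x i))))"
      by (simp add: sqrt_prod)
  qed
  also have "\<dots> = (\<Prod>i<n. \<integral>\<^sup>+x. ennreal (sqrt (ell e x)) \<partial>mu (1/2))"
    by (rule product_nn_integral_prod) (simp, rule meas_mu)
  also have "\<dots> = ennreal ((1/2 * sqrt (1 + 4*e) + 1/2 * sqrt (1 - 4*e)) ^ n)"
    by (simp only: BC_one[OF assms] prod_constant card_lessThan) (rule ennreal_power, use assms in simp)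
  finally show ?thesis .
qed

lemma BC_lower: assumes "0 \<le> e" "e < 1/4"
  shows "1 - 8 * e^2 \<le> 1/2 * sqrt (1 + 4*e) + 1/2 * sqrt (1 - 4*e)"
proof -
  define u where "u = 4*e"
  have u: "0 \<le> u" "u < 1" using assms by (auto simp: u_def)
  define s where "s = sqrt (1 + u) + sqrt (1 - u)"
  have s0: "0 \<le> s" using u by (simp add: s_def)
  have "s^2 = 2 + 2 * sqrt (1 - u^2)"
  proof -
    have "s^2 = (sqrt (1+u))^2 + (sqrt (1-u))^2 + 2 * (sqrt (1+u) * sqrt (1-u))"
      by (simp add: s_def power2_eq_square algebra_simps)
    also have "\<dots> = 2 + 2 * sqrt (1 - u^2)"
      using u by (simp add: real_sqrt_mult[symmetric] power2_eq_square algebra_simps)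
    finally show ?thesis .
  qed
  moreover have "1 - u^2 \<le> sqrt (1 - u^2)"
  proof -
    have "0 \<le> 1 - u^2" "1 - u^2 \<le> 1" using u by (auto simp: power2_eq_square mult_le_one)
    moreover define y where "y = 1 - u^2"
    ultimately have y: "0 \<le> y" "y \<le> 1" by auto
    have "sqrt y \<le> 1" using y by simp
    have "y = sqrt y * sqrt y" using y by simp
    also have "\<dots> \<le> sqrt y * 1" using \<open>sqrt y \<le> 1\<close> y by (intro mult_left_mono) auto
    finally show ?thesis by (simp add: y_def)
  qed
  ultimately have s2: "s^2 \<ge> 4 - 2 * u^2" by linarith
  have u2: "u^2 \<le> 1" using u by (simp add: power2_eq_square mult_le_one)
  have uu: "u^2 * u^2 \<le> u^2" using mult_left_mono[of "u^2" 1 "u^2"] u2 by simp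
  have e1: "(2 - u^2)^2 = 4 - 4 * u^2 + u^2 * u^2" by (simp add: power2_eq_square algebra_simps)
  have "(2 - u^2)^2 \<le> 4 - 2 * u^2" unfolding e1 using uu zero_le_power2[of u] by linarith
  hence "(2 - u^2)^2 \<le> s^2" using s2 by (rule order.trans)
  hence "2 - u^2 \<le> s" using s0 by (rule power2_le_imp_le)
  thus ?thesis unfolding s_def u_def by (simp add: power2_eq_square)
qed

lemma meas_comp_C: "i \<in> I \<Longrightarrow> (\<lambda>x. f (x i)) \<in> borel_measurable (PiM I (\<lambda>_. C))"
proof -
  assume "i \<in> I"
  hence "(\<lambda>x. x i) \<in> measurable (PiM I (\<lambda>_. C)) C" by (rule measurable_component_singleton)
  thus ?thesis by (rule measurable_compose) (rule meas_C)
qed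

lemma meas_comp_mu: "i \<in> I \<Longrightarrow> (\<lambda>x. f (x i)) \<in> borel_measurable (PiM I (\<lambda>_. mu p))"
proof -
  assume "i \<in> I"
  hence "(\<lambda>x. x i) \<in> measurable (PiM I (\<lambda>_. mu p)) (mu p)" by (rule measurable_component_singleton)
  thus ?thesis by (rule measurable_compose) (rule meas_mu)
qed

lemma lower:
  fixes \<epsilon> :: real and n :: nat and E :: "(nat \<Rightarrow> real) \<times> (nat \<Rightarrow> real) \<Rightarrow> real"
  assumes eps: "0 < \<epsilon>" "\<epsilon> < 1/8"
  and Em: "E \<in> borel_measurable (PiM {..<n} (\<lambda>_. C) \<Otimes>\<^sub>M PiM {..<n} (\<lambda>_. borel))"
  and succ: "\<forall>\<mu>\<in>{mu (1/2), mu ((1 + 4*\<epsilon>)/2)}. \<forall>Z::real. Z > 0 \<longrightarrow>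
            measure (PiM {..<n} (\<lambda>_. \<mu>))
              {xs \<in> space (PiM {..<n} (\<lambda>_. \<mu>)).
                 (1 - \<epsilon>) * Z \<le> E (xs, restrict (\<lambda>i. Z * enn2real (RN_deriv \<mu> nu0 (xs i))) {..<n})
               \<and> E (xs, restrict (\<lambda>i. Z * enn2real (RN_deriv \<mu> nu0 (xs i))) {..<n}) \<le> (1 + \<epsilon>) * Z}
            \<ge> 2/3"
  shows "real n \<ge> (1/144) / \<epsilon>\<^sup>2"
proof -
  define a :: real where "a = 1/2"
  define b :: real where "b = (1 + 4*\<epsilon>)/2"
  have ab: "0 < a" "a < 1" "0 < b" "b < 1" using eps by (auto simp: a_def b_def)
  define PC where "PC = PiM {..<n} (\<lambda>_. C)"
  define F where "F xs = E (xs, restrict (\<lambda>i. if xs i = 1 then 1 else (0::real)) {..<n})" for xs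
  have g: "(\<lambda>xs. (xs, restrict (\<lambda>i. if xs i = 1 then 1 else (0::real)) {..<n}))
      \<in> measurable PC (PiM {..<n} (\<lambda>_. C) \<Otimes>\<^sub>M PiM {..<n} (\<lambda>_. borel))"
    unfolding PC_def
  proof (rule measurable_Pair)
    show "(\<lambda>x. x) \<in> measurable (PiM {..<n} (\<lambda>_. C)) (PiM {..<n} (\<lambda>_. C))" by simp
    show "(\<lambda>xs. restrict (\<lambda>i. if xs i = 1 then 1 else (0::real)) {..<n})
       \<in> measurable (PiM {..<n} (\<lambda>_. C)) (PiM {..<n} (\<lambda>_. borel))"
    proof (rule measurable_restrict)
      fix i assume "i \<in> {..<n}"
      thus "(\<lambda>xs. if xs i = 1 then 1 else (0::real)) \<in> measurable (PiM {..<n} (\<lambda>_. C)) borel"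
        by (rule meas_comp_C)
    qed
  qed
  have Fm[measurable]: "F \<in> borel_measurable PC"
    unfolding F_def by (rule measurable_compose[OF g Em])
  have space_eq: "space (PiM {..<n} (\<lambda>_. mu p)) = space PC" for p
    by (simp add: PC_def space_PiM)
  have sets_eq: "sets (PiM {..<n} (\<lambda>_. mu p)) = sets PC" for p
    unfolding PC_def by (rule sets_PiM_cong) simp_all
  have setp: "{xs \<in> space (PiM {..<n} (\<lambda>_. mu p)).
                 (1 - \<epsilon>) * p \<le> E (xs, restrict (\<lambda>i. p * enn2real (RN_deriv (mu p) nu0 (xs i))) {..<n})
               \<and> E (xs, restrict (\<lambda>i. p * enn2real (RN_deriv (mu p) nu0 (xs i))) {..<n}) \<le> (1 + \<epsilon>) * p}
       = {xs \<in> space PC. (1 - \<epsilon>) * p \<le> F xs \<and> F xs \<le> (1 + \<epsilon>) * p}"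
    if p: "0 < p" "p < 1" for p
  proof -
    have "restrict (\<lambda>i. p * enn2real (RN_deriv (mu p) nu0 (xs i))) {..<n}
        = restrict (\<lambda>i. if xs i = 1 then 1 else (0::real)) {..<n}" if xs: "xs \<in> space PC" for xs
    proof (rule restrict_ext)
      fix i assume "i \<in> {..<n}"
      hence "xs i \<in> {0,1}" using xs by (auto simp: PC_def space_PiM PiE_def Pi_def)
      thus "p * enn2real (RN_deriv (mu p) nu0 (xs i)) = (if xs i = 1 then 1 else 0)"
        using p by (auto simp: RN_mu fR_def)
    qed
    thus ?thesis unfolding space_eq F_def by auto
  qed
  define S where "S = {xs \<in> space PC. (1 - \<epsilon>) * a \<le> F xs \<and> F xs \<le> (1 + \<epsilon>) * a}"
  define T where "T = {xs \<in> space PC. (1 - \<epsilon>) * b \<le> F xs \<and> F xs \<le> (1 + \<epsilon>) * b}"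
  have S_m: "S \<in> sets PC"
  proof -
    have "S = F -` {(1 - \<epsilon>) * a..(1 + \<epsilon>) * a} \<inter> space PC" by (auto simp: S_def)
    thus ?thesis using measurable_sets[OF Fm atLeastAtMost_borel[of "(1 - \<epsilon>) * a" "(1 + \<epsilon>) * a"]] by (simp only:)
  qed
  have T_m: "T \<in> sets PC"
  proof -
    have "T = F -` {(1 - \<epsilon>) * b..(1 + \<epsilon>) * b} \<inter> space PC" by (auto simp: T_def)
    thus ?thesis using measurable_sets[OF Fm atLeastAtMost_borel[of "(1 - \<epsilon>) * b" "(1 + \<epsilon>) * b"]] by (simp only:)
  qed
  have "(1 + \<epsilon>) * a < (1 - \<epsilon>) * b"
  proof -
    have "\<epsilon> * \<epsilon> < \<epsilon> * (1/2)" using eps by (intro mult_strict_left_mono) auto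
    thus ?thesis unfolding a_def b_def by (simp add: field_simps)
  qed
  hence ST: "S \<inter> T = {}" unfolding S_def T_def by auto
  have PS: "measure (PiM {..<n} (\<lambda>_. mu a)) S \<ge> 2/3"
  proof -
    have mem: "mu a \<in> {mu (1/2), mu ((1 + 4*\<epsilon>)/2)}" by (simp add: a_def)
    note h = bspec[OF succ mem, rule_format, OF ab(1)]
    show ?thesis using h[unfolded setp[OF ab(1,2)]] unfolding S_def .
  qed
  have QT: "measure (PiM {..<n} (\<lambda>_. mu b)) T \<ge> 2/3"
  proof -
    have mem: "mu b \<in> {mu (1/2), mu ((1 + 4*\<epsilon>)/2)}" by (simp add: b_def)
    note h = bspec[OF succ mem, rule_format, OF ab(3)]
    show ?thesis using h[unfolded setp[OF ab(3,4)]] unfolding T_def .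
  qed
  define L where "L x = (\<Prod>i<n. ell \<epsilon> (x i))" for x
  have Lnn: "0 \<le> L x" for x unfolding L_def using eps by (intro prod_nonneg) (simp add: ell_nn)
  have Lm: "L \<in> borel_measurable (PiM {..<n} (\<lambda>_. mu a))"
    unfolding L_def
    by (intro borel_measurable_prod meas_comp_mu)
  have Qeq: "PiM {..<n} (\<lambda>_. mu b) = density (PiM {..<n} (\<lambda>_. mu a)) (\<lambda>x. ennreal (L x))"
  proof -
    have "PiM {..<n} (\<lambda>_. mu b) = PiM {..<n} (\<lambda>_. density (mu a) (\<lambda>x. ennreal (ell \<epsilon> x)))"
      unfolding a_def b_def using eps by (simp add: mu_b)
    also have "\<dots> = density (PiM {..<n} (\<lambda>_. mu a)) (\<lambda>x. \<Prod>i<n. ennreal (ell \<epsilon> (x i)))"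
    proof (rule PiM_density_eq)
      show "sigma_finite_measure (mu a)" using ab by (intro prob_space_imp_sigma_finite mu_prob) auto
      have "density (mu a) (\<lambda>x. ennreal (ell \<epsilon> x)) = mu b"
        unfolding a_def b_def using eps by (simp add: mu_b)
      thus "sigma_finite_measure (density (mu a) (\<lambda>x. ennreal (ell \<epsilon> x)))"
        using ab by (simp add: prob_space_imp_sigma_finite mu_prob)
    qed (simp_all add: meas_mu)
    also have "\<dots> = density (PiM {..<n} (\<lambda>_. mu a)) (\<lambda>x. ennreal (L x))"
      unfolding L_def using eps by (intro arg_cong[where f="density _"] ext prod_ennreal) (simp add: ell_nn)
    finally show ?thesis .
  qed
  have Pprob: "prob_space (PiM {..<n} (\<lambda>_. mu a))"
    using ab by (intro prob_space_PiM mu_prob) auto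
  have Qprob: "prob_space (density (PiM {..<n} (\<lambda>_. mu a)) (\<lambda>x. ennreal (L x)))"
    unfolding Qeq[symmetric] using ab by (intro prob_space_PiM mu_prob) auto
  have bc: "(\<integral>\<^sup>+x. ennreal (sqrt (L x)) \<partial>PiM {..<n} (\<lambda>_. mu a)) \<le> ennreal (17/18)"
  proof (rule BC_bound[OF Pprob Qprob Lm Lnn, of S T])
    show "S \<in> sets (PiM {..<n} (\<lambda>_. mu a))" using S_m sets_eq by simp
    show "T \<in> sets (PiM {..<n} (\<lambda>_. mu a))" using T_m sets_eq by simp
    show "S \<inter> T = {}" by fact
    show "2/3 \<le> measure (PiM {..<n} (\<lambda>_. mu a)) S" by fact
    show "2/3 \<le> measure (density (PiM {..<n} (\<lambda>_. mu a)) (\<lambda>x. ennreal (L x))) T"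
      using QT Qeq by simp
  qed
  define \<beta> where "\<beta> = 1/2 * sqrt (1 + 4*\<epsilon>) + 1/2 * sqrt (1 - 4*\<epsilon>)"
  have "(\<integral>\<^sup>+x. ennreal (sqrt (L x)) \<partial>PiM {..<n} (\<lambda>_. mu a)) = ennreal (\<beta> ^ n)"
    unfolding L_def a_def \<beta>_def using eps by (intro BC_prod) auto
  with bc have "\<beta> ^ n \<le> 17/18" by (simp add: ennreal_le_iff)
  moreover have "1 - 8 * \<epsilon>^2 \<le> \<beta>" unfolding \<beta>_def using eps by (intro BC_lower) auto
  moreover have e2: "\<epsilon>^2 < 1/64"
  proof -
    have "\<epsilon>^2 < (1/8)^2" using eps by (intro power_strict_mono) auto
    thus ?thesis by (simp add: power2_eq_square)
  qed
  ultimately have bn: "\<beta> ^ n \<le> 17/18" "1 - 8 * \<epsilon>^2 \<le> \<beta>" "\<epsilon>^2 < 1/64" by auto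
  have nn: "0 \<le> 1 - 8 * \<epsilon>^2" using bn(3) by simp
  have "(1 - 8 * \<epsilon>^2) ^ n \<le> \<beta> ^ n" by (rule power_mono[OF bn(2) nn])
  with bn(1) have p1: "(1 - 8 * \<epsilon>^2) ^ n \<le> 17/18" by linarith
  have "1 + real n * (- (8 * \<epsilon>^2)) \<le> (1 + - (8 * \<epsilon>^2)) ^ n"
    by (rule Bernoulli_inequality) (use bn(3) in simp)
  with p1 have "1 - real n * (8 * \<epsilon>^2) \<le> 17/18" by simp
  hence key: "1/144 \<le> real n * \<epsilon>^2" by simp
  have "0 < \<epsilon>^2" using eps by simp
  thus ?thesis using key by (simp add: pos_divide_le_eq)
qed

theorem proposition12:
  shows "\<exists>c::real>0. \<forall>\<epsilon>::real. 0 < \<epsilon> \<and> \<epsilon> < 1/8 \<longrightarrow>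
    (\<exists>(M::real measure) (\<nu>::real measure) (U::real measure set).
      prob_space \<nu> \<and> sets \<nu> = sets M \<and>
      (\<forall>\<mu>\<in>U. prob_space \<mu> \<and> sets \<mu> = sets M \<and>
              absolutely_continuous \<mu> \<nu> \<and>
              (AE x in \<mu>. RN_deriv \<mu> \<nu> x \<le> 4)) \<and>
      (\<forall>(n::nat) (E :: (nat \<Rightarrow> real) \<times> (nat \<Rightarrow> real) \<Rightarrow> real).
         E \<in> borel_measurable (PiM {..<n} (\<lambda>_. M) \<Otimes>\<^sub>M PiM {..<n} (\<lambda>_. borel)) \<and>
         (\<forall>\<mu>\<in>U. \<forall>Z::real. Z > 0 \<longrightarrow>
            measure (PiM {..<n} (\<lambda>_. \<mu>))
              {xs \<in> space (PiM {..<n} (\<lambda>_. \<mu>)).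
                 (1 - \<epsilon>) * Z \<le> E (xs, restrict (\<lambda>i. Z * enn2real (RN_deriv \<mu> \<nu> (xs i))) {..<n})
               \<and> E (xs, restrict (\<lambda>i. Z * enn2real (RN_deriv \<mu> \<nu> (xs i))) {..<n}) \<le> (1 + \<epsilon>) * Z}
            \<ge> 2/3)
         \<longrightarrow> real n \<ge> c / \<epsilon>\<^sup>2))"
proof (rule exI[of _ "1/144"], intro conjI allI impI)
  show "(0::real) < 1/144" by simp
  fix \<epsilon> :: real assume eps: "0 < \<epsilon> \<and> \<epsilon> < 1/8"
  define U0 where "U0 = {mu (1/2), mu ((1 + 4*\<epsilon>)/2)}"
  have U: "prob_space \<mu> \<and> sets \<mu> = sets C \<and> absolutely_continuous \<mu> nu0 \<and> (AE x in \<mu>. RN_deriv \<mu> nu0 x \<le> 4)"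
    if mU: "\<mu> \<in> U0" for \<mu>
  proof -
    obtain p where p: "\<mu> = mu p" "0 < p" "p < 1" "1/2 \<le> p"
    proof -
      consider "\<mu> = mu (1/2)" | "\<mu> = mu ((1 + 4*\<epsilon>)/2)" using mU unfolding U0_def by blast
      thus thesis
      proof cases
        case 1 then show thesis by (intro that[of "1/2"]) auto
      next
        case 2 then show thesis using eps by (intro that[of "(1 + 4*\<epsilon>)/2"]) auto
      qed
    qed
    have "RN_deriv \<mu> nu0 x \<le> 4" if x: "x \<in> {0,1}" for x
    proof -
      have "1/p \<le> 4" using p by (simp add: divide_le_eq)
      hence "fR p x \<le> 4" unfolding fR_def by (auto simp: ennreal_le_iff[symmetric])
      thus ?thesis using RN_mu[OF p(2,3) x] p(1) by simp
    qed
    hence "AE x in mu p. RN_deriv \<mu> nu0 x \<le> 4" by (subst AE_mu[OF p(2,3)]) auto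
    hence "AE x in \<mu>. RN_deriv \<mu> nu0 x \<le> 4" unfolding p(1) .
    moreover have "prob_space \<mu>" using p by (simp add: mu_prob)
    moreover have "absolutely_continuous \<mu> nu0" using p by (simp add: ac_mu)
    ultimately show ?thesis using p by simp
  qed
  have L: "real n \<ge> (1/144) / \<epsilon>\<^sup>2"
    if "E \<in> borel_measurable (PiM {..<n} (\<lambda>_. C) \<Otimes>\<^sub>M PiM {..<n} (\<lambda>_. borel)) \<and>
         (\<forall>\<mu>\<in>U0. \<forall>Z::real. Z > 0 \<longrightarrow>
            measure (PiM {..<n} (\<lambda>_. \<mu>))
              {xs \<in> space (PiM {..<n} (\<lambda>_. \<mu>)).
                 (1 - \<epsilon>) * Z \<le> E (xs, restrict (\<lambda>i. Z * enn2real (RN_deriv \<mu> nu0 (xs i))) {..<n})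
               \<and> E (xs, restrict (\<lambda>i. Z * enn2real (RN_deriv \<mu> nu0 (xs i))) {..<n}) \<le> (1 + \<epsilon>) * Z}
            \<ge> 2/3)" for n :: nat and E :: "(nat \<Rightarrow> real) \<times> (nat \<Rightarrow> real) \<Rightarrow> real"
    using lower[of \<epsilon> E n] that eps unfolding U0_def by blast
  have N: "prob_space nu0" "sets nu0 = sets C" by (simp_all add: nu0_prob)
  show "\<exists>(M::real measure) (\<nu>::real measure) (U::real measure set).
      prob_space \<nu> \<and> sets \<nu> = sets M \<and>
      (\<forall>\<mu>\<in>U. prob_space \<mu> \<and> sets \<mu> = sets M \<and>
              absolutely_continuous \<mu> \<nu> \<and>
              (AE x in \<mu>. RN_deriv \<mu> \<nu> x \<le> 4)) \<and>
      (\<forall>(n::nat) (E :: (nat \<Rightarrow> real) \<times> (nat \<Rightarrow> real) \<Rightarrow> real).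
         E \<in> borel_measurable (PiM {..<n} (\<lambda>_. M) \<Otimes>\<^sub>M PiM {..<n} (\<lambda>_. borel)) \<and>
         (\<forall>\<mu>\<in>U. \<forall>Z::real. Z > 0 \<longrightarrow>
            measure (PiM {..<n} (\<lambda>_. \<mu>))
              {xs \<in> space (PiM {..<n} (\<lambda>_. \<mu>)).
                 (1 - \<epsilon>) * Z \<le> E (xs, restrict (\<lambda>i. Z * enn2real (RN_deriv \<mu> \<nu> (xs i))) {..<n})
               \<and> E (xs, restrict (\<lambda>i. Z * enn2real (RN_deriv \<mu> \<nu> (xs i))) {..<n}) \<le> (1 + \<epsilon>) * Z}
            \<ge> 2/3)
         \<longrightarrow> real n \<ge> (1/144) / \<epsilon>\<^sup>2)"
    apply (rule exI[of _ C], rule exI[of _ nu0], rule exI[of _ U0])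
    using N U L by blast
qed

end
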